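(* Under the hypotheses of Theorem 3.1 (namely: $\phi\in\Phi$, $f:\mathbb{R}^n\to(-\infty,+\infty]$ proper lsc, $\Omega\subseteq\mathbb{R}^n$ closed, $\delta\ge0$, $p\in[1,\infty]$, $\mathcal{J}=\{J_1,\dots,J_m\}$ a partition of $\{1,\dots,n\}$, the problem $\min_x\{\|G_{\mathcal{J},p}(x)\|_0: f(x)\le\delta,x\in\Omega\}$ has a nonempty global optimal solution set with nonzero optimal value $s^*$, and there is $\alpha>0$ with $\pi_{s^*}(G_{\mathcal{J},p}(x))\ge\alpha$ for all $x\in\Omega$ with $f(x)\le\delta$), for every $\varrho>\phi'_-(1)/\alpha$ the problem $\min_x\{\|G_{\mathcal{J},p}(x)\|_0: f(x)\le\delta,x\in\Omega\}$ has the same set of global optimal solutions as $$\textstyle\min_{x\in\mathbb{R}^n}\Big\{\varrho\sum_{i=1}^m\|x_{J_i}\|_p-\sum_{i=1}^m\psi^*(\varrho\|x_{J_i}\|_p):\ f(x)\le\delta,\ x\in\Omega\Big\}.$$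
   Context: $\Phi$ is the family of proper lsc functions $\phi:\mathbb{R}\to(-\infty,+\infty]$ with $\mathrm{int}(\mathrm{dom}\,\phi)\supseteq[0,1]$, convex on $[0,1]$, such that $\min_{t\in[0,1]}\phi(t)=0$ is attained at a (fixed) point $t^*\in[0,1)$, and $\phi(1)=1$; $\phi'_-(1)$ is the left derivative at $1$. $\psi(t)=\phi(t)$ for $t\in[0,1]$ and $\psi(t)=+\infty$ otherwise; $\psi^*(s)=\sup_{t\in\mathbb{R}}\{st-\psi(t)\}$. $G_{\mathcal{J},p}(x):=(\|x_{J_1}\|_p,\dots,\|x_{J_m}\|_p)^T$; $\|v\|_0$ counts nonzero entries; $\pi_i(v)$ is the $i$-th largest entry of $|v|$. *)

theory Defs
  imports "HOL-Analysis.Analysis"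
begin

definition lsc :: "('a::topological_space \<Rightarrow> ereal) \<Rightarrow> bool" where
  "lsc f \<longleftrightarrow> (\<forall>x. f x \<le> Liminf (at x) f)"

definition proper_fun :: "('a \<Rightarrow> ereal) \<Rightarrow> bool" where
  "proper_fun f \<longleftrightarrow> (\<forall>x. f x \<noteq> -\<infinity>) \<and> (\<exists>x. f x < \<infinity>)"

definition edom :: "('a \<Rightarrow> ereal) \<Rightarrow> 'a set" where
  "edom f = {x. f x < \<infinity>}"

text \<open>The family Phi (with the minimiser t* existentially chosen).\<close>
definition Phi_class :: "(real \<Rightarrow> ereal) \<Rightarrow> bool" where
  "Phi_class \<phi> \<longleftrightarrow> proper_fun \<phi> \<and> lsc \<phi> \<and>
     {0..1} \<subseteq> interior (edom \<phi>) \<and>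
     convex_on {0..1} (\<lambda>t. real_of_ereal (\<phi> t)) \<and>
     (\<forall>t\<in>{0..1}. 0 \<le> \<phi> t) \<and> (\<exists>ts\<in>{0..<1}. \<phi> ts = 0) \<and>
     \<phi> 1 = 1"

definition left_deriv_1 :: "(real \<Rightarrow> ereal) \<Rightarrow> ereal" where
  "left_deriv_1 \<phi> = Lim (at_left 1)
     (\<lambda>t. ereal ((real_of_ereal (\<phi> 1) - real_of_ereal (\<phi> t)) / (1 - t)))"

definition psi :: "(real \<Rightarrow> ereal) \<Rightarrow> real \<Rightarrow> ereal" where
  "psi \<phi> t = (if t \<in> {0..1} then \<phi> t else \<infinity>)"

definition psi_conj :: "(real \<Rightarrow> ereal) \<Rightarrow> real \<Rightarrow> ereal" where
  "psi_conj \<phi> s = (SUP t. ereal (s * t) - psi \<phi> t)"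

definition sub_pnorm :: "ereal \<Rightarrow> 'n set \<Rightarrow> real ^ 'n \<Rightarrow> real" where
  "sub_pnorm p J x = (if p = \<infinity> then Max ((\<lambda>j. \<bar>x $ j\<bar>) ` J)
      else (\<Sum>j\<in>J. \<bar>x $ j\<bar> powr real_of_ereal p) powr (1 / real_of_ereal p))"

text \<open>G_{J,p}(x), as a vector indexed by 0..m-1.\<close>
definition G_map :: "nat \<Rightarrow> (nat \<Rightarrow> 'n set) \<Rightarrow> ereal \<Rightarrow> real ^ 'n \<Rightarrow> nat \<Rightarrow> real" where
  "G_map m J p x = (\<lambda>i. sub_pnorm p (J i) x)"

definition l0 :: "nat \<Rightarrow> (nat \<Rightarrow> real) \<Rightarrow> nat" where
  "l0 m v = card {i. i < m \<and> v i \<noteq> 0}"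

text \<open>pi_k(v): k-th largest entry of |v| (k = 1..m).\<close>
definition pi_k :: "nat \<Rightarrow> nat \<Rightarrow> (nat \<Rightarrow> real) \<Rightarrow> real" where
  "pi_k m k v = rev (sort (map (\<lambda>i. \<bar>v i\<bar>) [0..<m])) ! (k - 1)"

definition is_partition :: "nat \<Rightarrow> (nat \<Rightarrow> 'n set) \<Rightarrow> bool" where
  "is_partition m J \<longleftrightarrow> (\<forall>i<m. J i \<noteq> {}) \<and>
     (\<forall>i<m. \<forall>k<m. i \<noteq> k \<longrightarrow> J i \<inter> J k = {}) \<and> (\<Union>i<m. J i) = UNIV"

definition gmin_set :: "'a set \<Rightarrow> ('a \<Rightarrow> 'b::linorder) \<Rightarrow> 'a set" where
  "gmin_set F g = {x \<in> F. \<forall>y\<in>F. g x \<le> g y}"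

end

theory Submission
  imports Defs
begin

lemma phi_fin:
  assumes "Phi_class \<phi>" "t \<in> {0..1}"
  shows "\<phi> t = ereal (real_of_ereal (\<phi> t)) \<and> 0 \<le> real_of_ereal (\<phi> t)"
proof -
  have "t \<in> edom \<phi>" using assms interior_subset unfolding Phi_class_def by blast
  hence "\<phi> t < \<infinity>" by (simp add: edom_def)
  moreover have "0 \<le> \<phi> t" using assms unfolding Phi_class_def by blast
  ultimately show ?thesis by (cases "\<phi> t") auto
qed

lemma phi1: "Phi_class \<phi> \<Longrightarrow> real_of_ereal (\<phi> 1) = 1"
  unfolding Phi_class_def by simp

lemma q_mono:
  assumes phi: "Phi_class \<phi>" and t: "0 \<le> t" "t < u" "u < 1"
  shows "(1 - real_of_ereal (\<phi> t))/(1-t) \<le> (1 - real_of_ereal (\<phi> u))/(1-u)"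
proof -
  define g where "g = (\<lambda>t. real_of_ereal (\<phi> t))"
  have cv: "convex_on {0..1} g" using phi unfolding Phi_class_def g_def by blast
  define \<mu> where "\<mu> = (u-t)/(1-t)"
  have m0: "0 \<le> \<mu>" "\<mu> \<le> 1" using t by (auto simp: \<mu>_def field_simps)
  have "g ((1 - \<mu>) *\<^sub>R t + \<mu> *\<^sub>R 1) \<le> (1 - \<mu>) * g t + \<mu> * g 1"
    using convex_onD[OF cv m0, of t 1] t by auto
  moreover have "(1 - \<mu>) *\<^sub>R t + \<mu> *\<^sub>R 1 = u"
  proof -
    have "\<mu>*(1-t) = u - t" using t by (simp add: \<mu>_def)
    thus ?thesis by (simp add: algebra_simps)
  qed
  moreover have "g 1 = 1" using phi1[OF phi] by (simp add: g_def)
  ultimately have A: "g u \<le> (1 - \<mu>) * g t + \<mu>" by simp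
  have "1 - \<mu> = (1-u)/(1-t)" using t by (simp add: \<mu>_def field_simps)
  hence "1 - g u \<ge> (1-u)/(1-t) * (1 - g t)" using A
  proof -
    assume e: "1 - \<mu> = (1-u)/(1-t)"
    have "1 - g u \<ge> (1 - \<mu>) * (1 - g t)" using A by (simp add: algebra_simps)
    thus ?thesis using e by simp
  qed
  hence "(1-u)/(1-t) * (1 - g t) / (1-u) \<le> (1 - g u)/(1-u)" by (rule divide_right_mono) (use t in auto)
  moreover have "(1-u)/(1-t) * (1 - g t) / (1-u) = (1 - g t)/(1-t)" using t by simp
  ultimately show ?thesis using t by (simp add: g_def)
qed

lemma deriv_eq:
  assumes phi: "Phi_class \<phi>"
  shows "left_deriv_1 \<phi> = (SUP t\<in>{0..<1}. ereal ((1 - real_of_ereal (\<phi> t))/(1-t)))"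
    (is "_ = ?S")
proof -
  let ?q = "\<lambda>t. ereal ((1 - real_of_ereal (\<phi> t))/(1-t))"
  have "(?q \<longlongrightarrow> ?S) (at_left 1)"
  proof (rule order_tendstoI)
    fix a assume "a < ?S"
    then obtain u where u: "u \<in> {0..<1}" "a < ?q u" by (auto simp: less_SUP_iff)
    have "\<forall>\<^sub>F x in at_left 1. x \<in> {u<..<1}" using u by (intro eventually_at_left_real) auto
    thus "\<forall>\<^sub>F x in at_left 1. a < ?q x"
    proof eventually_elim
      case (elim x)
      have "?q u \<le> ?q x" using q_mono[OF phi, of u x] elim u by auto
      thus ?case using u(2) by (meson less_le_trans)
    qed
  next
    fix a assume a: "?S < a"
    have "\<forall>\<^sub>F x in at_left 1. x \<in> {0<..<(1::real)}" by (intro eventually_at_left_real) auto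
    thus "\<forall>\<^sub>F x in at_left 1. ?q x < a"
    proof eventually_elim
      case (elim x)
      have "?q x \<le> ?S" using elim by (intro SUP_upper) auto
      thus ?case using a by simp
    qed
  qed
  hence "Lim (at_left 1) ?q = ?S" by (intro tendsto_Lim) auto
  thus ?thesis unfolding left_deriv_1_def using phi1[OF phi] by simp
qed

lemma conj_upper:
  assumes phi: "Phi_class \<phi>" and B: "\<forall>t\<in>{0..1}. s*t - real_of_ereal (\<phi> t) \<le> B"
  shows "psi_conj \<phi> s \<le> ereal B"
  unfolding psi_conj_def
proof (rule SUP_least)
  fix t :: real
  show "ereal (s * t) - psi \<phi> t \<le> ereal B"
  proof (cases "t \<in> {0..1}")
    case True
    have "psi \<phi> t = ereal (real_of_ereal (\<phi> t))" using phi_fin[OF phi True] True by (simp add: psi_def)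
    thus ?thesis using B True by simp
  next
    case False hence "psi \<phi> t = \<infinity>" unfolding psi_def by (simp only: if_False)
    thus ?thesis by simp
  qed
qed

lemma conj_lower:
  assumes phi: "Phi_class \<phi>" and t: "t \<in> {0..1}"
  shows "ereal (s*t - real_of_ereal (\<phi> t)) \<le> psi_conj \<phi> s"
  unfolding psi_conj_def
proof (rule SUP_upper2[of t])
  have "psi \<phi> t = ereal (real_of_ereal (\<phi> t))" using phi_fin[OF phi t] t by (simp add: psi_def)
  thus "ereal (s*t - real_of_ereal (\<phi> t)) \<le> ereal (s * t) - psi \<phi> t" by simp
qed auto

lemma deriv_pos:
  assumes phi: "Phi_class \<phi>" and d: "left_deriv_1 \<phi> = ereal d"
  shows "d > 0" and "\<forall>t\<in>{0..1}. real_of_ereal (\<phi> t) \<ge> 1 - d*(1-t)"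
proof -
  obtain ts where ts: "ts \<in> {0..<1}" "\<phi> ts = 0" using phi unfolding Phi_class_def by blast
  have "ereal ((1 - real_of_ereal (\<phi> ts))/(1-ts)) \<le> left_deriv_1 \<phi>"
    unfolding deriv_eq[OF phi] using ts by (intro SUP_upper) auto
  hence "1/(1-ts) \<le> d" using ts d by simp
  moreover have "1/(1-ts) > 0" using ts by simp
  ultimately show "d > 0" by linarith
  show "\<forall>t\<in>{0..1}. real_of_ereal (\<phi> t) \<ge> 1 - d*(1-t)"
  proof
    fix t :: real assume t: "t \<in> {0..1}"
    show "real_of_ereal (\<phi> t) \<ge> 1 - d*(1-t)"
    proof (cases "t = 1")
      case True thus ?thesis using phi1[OF phi] by simp
    next
      case False
      hence t': "t \<in> {0..<1}" using t by auto
      have "ereal ((1 - real_of_ereal (\<phi> t))/(1-t)) \<le> left_deriv_1 \<phi>"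
        unfolding deriv_eq[OF phi] using t' by (intro SUP_upper) auto
      hence "(1 - real_of_ereal (\<phi> t))/(1-t) \<le> d" using d by simp
      hence "1 - real_of_ereal (\<phi> t) \<le> d*(1-t)" using t' by (simp add: divide_le_eq)
      thus ?thesis by simp
    qed
  qed
qed

lemma hh_props:
  assumes phi: "Phi_class \<phi>" and d: "left_deriv_1 \<phi> = ereal d" and rho: "\<rho> > 0" and g: "g \<ge> 0"
  shows "\<exists>c. psi_conj \<phi> (\<rho>*g) = ereal c \<and> \<rho>*g - c \<le> 1 \<and> 0 \<le> \<rho>*g - c \<and>
           (g = 0 \<longrightarrow> \<rho>*g - c = 0) \<and> (g > 0 \<longrightarrow> \<rho>*g - c > 0) \<and> (d \<le> \<rho>*g \<longrightarrow> 1 \<le> \<rho>*g - c)"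
proof -
  define s where "s = \<rho>*g"
  have s0: "s \<ge> 0" using rho g by (simp add: s_def)
  have dpos: "d > 0" and lb: "\<forall>t\<in>{0..1}. real_of_ereal (\<phi> t) \<ge> 1 - d*(1-t)"
    using deriv_pos[OF phi d] by auto
  have nn: "\<forall>t\<in>{0..1}. real_of_ereal (\<phi> t) \<ge> 0" using phi_fin[OF phi] by blast
  have L: "ereal (s - 1) \<le> psi_conj \<phi> s" using conj_lower[OF phi, of 1 s] phi1[OF phi] by simp
  have U: "psi_conj \<phi> s \<le> ereal s"
  proof (rule conj_upper[OF phi], intro ballI)
    fix t :: real assume t: "t \<in> {0..1}"
    have "s*t \<le> s" using t s0 by (simp add: mult_left_le)
    thus "s*t - real_of_ereal (\<phi> t) \<le> s" using nn t by fastforce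
  qed
  define c where "c = real_of_ereal (psi_conj \<phi> s)"
  have ce: "psi_conj \<phi> s = ereal c" using L U unfolding c_def by (cases "psi_conj \<phi> s") auto
  have c1: "s - c \<le> 1" "0 \<le> s - c" using L U ce by auto
  have c2: "g = 0 \<longrightarrow> s - c = 0"
  proof
    assume "g = 0"
    hence s: "s = 0" by (simp add: s_def)
    obtain ts where ts: "ts \<in> {0..<1}" "\<phi> ts = 0" using phi unfolding Phi_class_def by blast
    have "ereal (s*ts - real_of_ereal (\<phi> ts)) \<le> psi_conj \<phi> s" using ts by (intro conj_lower[OF phi]) auto
    thus "s - c = 0" using ts s ce U by auto
  qed
  have c3: "g > 0 \<longrightarrow> s - c > 0"
  proof
    assume "g > 0"
    hence sp: "s > 0" using rho by (simp add: s_def)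
    define mm where "mm = min (1/2) (s/(2*d))"
    have mmp: "mm > 0" using sp dpos by (simp add: mm_def)
    have "psi_conj \<phi> s \<le> ereal (s - mm)"
    proof (rule conj_upper[OF phi], intro ballI)
      fix t :: real assume t: "t \<in> {0..1}"
      have st: "s*t \<le> s" using t s0 by (simp add: mult_left_le)
      show "s*t - real_of_ereal (\<phi> t) \<le> s - mm"
      proof (cases "d*(1-t) \<le> 1/2")
        case True
        hence "real_of_ereal (\<phi> t) \<ge> 1/2" using lb t by fastforce
        moreover have "mm \<le> 1/2" by (simp add: mm_def)
        ultimately show ?thesis using st by linarith
      next
        case False
        hence "1/(2*d) \<le> 1 - t" using dpos by (simp add: field_simps)
        hence "s * (1/(2*d)) \<le> s*(1-t)" using s0 by (rule mult_left_mono)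
        hence "s/(2*d) \<le> s - s*t" by (simp add: algebra_simps)
        moreover have "mm \<le> s/(2*d)" by (simp add: mm_def)
        ultimately show ?thesis using nn t by fastforce
      qed
    qed
    thus "s - c > 0" using ce mmp by simp
  qed
  have c4: "d \<le> s \<longrightarrow> 1 \<le> s - c"
  proof
    assume ds: "d \<le> s"
    have "psi_conj \<phi> s \<le> ereal (s - 1)"
    proof (rule conj_upper[OF phi], intro ballI)
      fix t :: real assume t: "t \<in> {0..1}"
      have "(d - s)*(1-t) \<le> 0" using ds t by (simp add: mult_nonpos_nonneg)
      hence "s*t + d*(1-t) \<le> s" by (simp add: algebra_simps)
      thus "s*t - real_of_ereal (\<phi> t) \<le> s - 1" using lb t by fastforce
    qed
    thus "1 \<le> s - c" using ce by simp
  qed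
  show ?thesis using ce c1 c2 c3 c4 unfolding s_def by blast
qed

lemma pi_count:
  assumes k: "1 \<le> k" "k \<le> m" and pa: "pi_k m k v \<ge> \<alpha>"
  shows "k \<le> card {i. i<m \<and> \<alpha> \<le> \<bar>v i\<bar>}"
proof -
  define xs where "xs = map (\<lambda>i. \<bar>v i\<bar>) [0..<m]"
  define zs where "zs = sort xs"
  define ys where "ys = rev zs"
  let ?P = "\<lambda>y. \<alpha> \<le> y"
  have lz: "length zs = m" by (simp add: zs_def xs_def)
  have ly: "length ys = m" by (simp add: ys_def lz)
  have sz: "sorted zs" by (simp add: zs_def)
  have yk: "ys ! (k-1) \<ge> \<alpha>" using pa by (simp add: pi_k_def ys_def zs_def xs_def)
  have all: "\<forall>y\<in>set (take k ys). ?P y"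
  proof
    fix y assume "y \<in> set (take k ys)"
    then obtain j where j: "j < length (take k ys)" "y = take k ys ! j" by (auto simp: in_set_conv_nth)
    hence jk: "j < k" "j < m" using ly k by auto
    have "ys ! j = zs ! (m - Suc j)" using jk ly lz by (simp add: ys_def rev_nth)
    moreover have "ys ! (k-1) = zs ! (m - Suc (k-1))" using k ly lz by (simp add: ys_def rev_nth)
    moreover have "zs ! (m - Suc (k-1)) \<le> zs ! (m - Suc j)"
      using jk k lz by (intro sorted_nth_mono[OF sz]) auto
    ultimately have "ys ! (k-1) \<le> ys ! j" by simp
    thus "?P y" using j jk yk by simp
  qed
  have tk: "length (filter ?P (take k ys)) = k" using all ly k by simp
  have "k \<le> length (filter ?P ys)"
  proof -
    have "ys = take k ys @ drop k ys" by simp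
    hence "length (filter ?P ys) = length (filter ?P (take k ys)) + length (filter ?P (drop k ys))"
      by (metis filter_append length_append)
    thus ?thesis using tk by linarith
  qed
  also have "length (filter ?P ys) = length (filter ?P xs)"
  proof -
    have "mset ys = mset xs" by (simp add: ys_def zs_def)
    hence "mset (filter ?P ys) = mset (filter ?P xs)" by (simp add: mset_filter)
    thus ?thesis by (metis size_mset)
  qed
  also have "\<dots> = card {i. i<m \<and> \<alpha> \<le> \<bar>v i\<bar>}"
    unfolding length_filter_conv_card by (rule arg_cong[where f=card]) (auto simp: xs_def)
  finally show ?thesis .
qed

theorem corollary3p1:
  fixes \<phi> :: "real \<Rightarrow> ereal" and f :: "real ^ 'n \<Rightarrow> ereal"
    and \<Omega> :: "(real ^ 'n) set" and \<delta> :: real and p :: ereal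
    and m :: nat and J :: "nat \<Rightarrow> 'n set" and s :: nat and \<alpha> :: real
  assumes phi: "Phi_class \<phi>"
    and f_proper: "proper_fun f" and f_lsc: "lsc f"
    and Omega_closed: "closed \<Omega>"
    and delta: "\<delta> \<ge> 0"
    and p: "1 \<le> p"
    and part: "is_partition m J"
    and opt: "\<exists>x\<in>{x. f x \<le> ereal \<delta> \<and> x \<in> \<Omega>}.
                x \<in> gmin_set {x. f x \<le> ereal \<delta> \<and> x \<in> \<Omega>} (\<lambda>x. l0 m (G_map m J p x))
                \<and> l0 m (G_map m J p x) = s"
    and s_nz: "s \<noteq> 0"
    and alpha: "\<alpha> > 0"
    and alpha_bd: "\<forall>x. f x \<le> ereal \<delta> \<and> x \<in> \<Omega> \<longrightarrow> pi_k m s (G_map m J p x) \<ge> \<alpha>"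
  shows "\<forall>\<rho>::real. ereal \<rho> > left_deriv_1 \<phi> / ereal \<alpha> \<longrightarrow>
           gmin_set {x. f x \<le> ereal \<delta> \<and> x \<in> \<Omega>} (\<lambda>x. l0 m (G_map m J p x)) =
           gmin_set {x. f x \<le> ereal \<delta> \<and> x \<in> \<Omega>}
             (\<lambda>x. ereal (\<rho> * (\<Sum>i<m. sub_pnorm p (J i) x))
                   - (\<Sum>i<m. psi_conj \<phi> (\<rho> * sub_pnorm p (J i) x)))"
  proof (intro allI impI)
  fix \<rho> :: real assume hr: "left_deriv_1 \<phi> / ereal \<alpha> < ereal \<rho>"
  define Feas where "Feas = {x. f x \<le> ereal \<delta> \<and> x \<in> \<Omega>}"
  define g where "g = (\<lambda>i x. sub_pnorm p (J i) x)"
  obtain ts where ts: "ts \<in> {0..<1}" "\<phi> ts = 0" using phi unfolding Phi_class_def by blast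
  have "ereal ((1 - real_of_ereal (\<phi> ts))/(1-ts)) \<le> left_deriv_1 \<phi>"
    unfolding deriv_eq[OF phi] using ts by (intro SUP_upper) auto
  hence Dlow: "ereal (1/(1-ts)) \<le> left_deriv_1 \<phi>" using ts by simp
  have "left_deriv_1 \<phi> \<noteq> \<infinity>"
  proof
    assume "left_deriv_1 \<phi> = \<infinity>" thus False using hr alpha by simp
  qed
  moreover have "left_deriv_1 \<phi> \<noteq> -\<infinity>" using Dlow by auto
  ultimately obtain d where d: "left_deriv_1 \<phi> = ereal d" by (cases "left_deriv_1 \<phi>") auto
  have dpos: "d > 0" using deriv_pos[OF phi d] by simp
  have "d / \<alpha> < \<rho>" using hr d alpha by simp
  hence drho: "d < \<rho> * \<alpha>" using alpha by (simp add: divide_less_eq mult.commute)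
  have rho: "\<rho> > 0"
  proof (rule ccontr)
    assume "\<not> \<rho> > 0" hence "\<rho> * \<alpha> \<le> 0" using alpha by (simp add: mult_nonpos_nonneg)
    thus False using drho dpos by linarith
  qed
  have gnn: "g i x \<ge> 0" if "i < m" for i x
  proof (cases "p = \<infinity>")
    case True
    have ne: "J i \<noteq> {}" using part that unfolding is_partition_def by blast
    then obtain j where "j \<in> J i" by blast
    hence "\<bar>x $ j\<bar> \<le> Max ((\<lambda>j. \<bar>x $ j\<bar>) ` J i)" by (intro Max_ge) auto
    hence "0 \<le> Max ((\<lambda>j. \<bar>x $ j\<bar>) ` J i)" by (meson abs_ge_zero order_trans)
    thus ?thesis using True unfolding g_def sub_pnorm_def by simp
  next
    case False thus ?thesis by (simp add: g_def sub_pnorm_def)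
  qed
  define H where "H = (\<lambda>y. \<rho>*y - real_of_ereal (psi_conj \<phi> (\<rho>*y)))"
  have Hp: "psi_conj \<phi> (\<rho>*y) = ereal (\<rho>*y - H y) \<and> H y \<le> 1 \<and> 0 \<le> H y \<and>
           (y = 0 \<longrightarrow> H y = 0) \<and> (y > 0 \<longrightarrow> H y > 0) \<and> (d \<le> \<rho>*y \<longrightarrow> 1 \<le> H y)"
    if y0: "y \<ge> 0" for y
  proof -
    obtain c where c: "psi_conj \<phi> (\<rho>*y) = ereal c \<and> \<rho>*y - c \<le> 1 \<and> 0 \<le> \<rho>*y - c \<and>
           (y = 0 \<longrightarrow> \<rho>*y - c = 0) \<and> (y > 0 \<longrightarrow> \<rho>*y - c > 0) \<and> (d \<le> \<rho>*y \<longrightarrow> 1 \<le> \<rho>*y - c)"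
      using hh_props[OF phi d rho y0] by blast
    hence "H y = \<rho>*y - c" by (simp add: H_def)
    hence Hy: "H y = \<rho>*y - c" .
    have c1: "psi_conj \<phi> (\<rho>*y) = ereal (\<rho>*y - H y)" using c Hy by simp
    have c2: "H y \<le> 1" "0 \<le> H y" using c Hy by linarith+
    have c3: "y = 0 \<longrightarrow> H y = 0"
    proof
      assume y: "y = 0"
      hence "c = 0" using c by simp
      thus "H y = 0" using Hy y by (simp del: H_def)
    qed
    have c4: "y > 0 \<longrightarrow> H y > 0" using c Hy by simp
    have c5: "d \<le> \<rho>*y \<longrightarrow> 1 \<le> H y" using c Hy by simp
    show ?thesis using c1 c2 c3 c4 c5 by blast
  qed
  define Fr where "Fr = (\<lambda>x. \<Sum>i<m. H (g i x))"
  have obj: "(\<lambda>x. ereal (\<rho> * (\<Sum>i<m. sub_pnorm p (J i) x)) - (\<Sum>i<m. psi_conj \<phi> (\<rho> * sub_pnorm p (J i) x)))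
      = (\<lambda>x. ereal (Fr x))"
  proof
    fix x
    have "(\<Sum>i<m. psi_conj \<phi> (\<rho> * sub_pnorm p (J i) x)) = (\<Sum>i<m. ereal (\<rho> * g i x - H (g i x)))"
      using Hp gnn unfolding g_def by (intro sum.cong) auto
    also have "\<dots> = ereal (\<Sum>i<m. \<rho> * g i x - H (g i x))" by (rule sum_ereal)
    finally have e: "(\<Sum>i<m. psi_conj \<phi> (\<rho> * sub_pnorm p (J i) x)) = ereal (\<Sum>i<m. \<rho> * g i x - H (g i x))" .
    have "(\<Sum>i<m. \<rho> * g i x - H (g i x)) = \<rho> * (\<Sum>i<m. g i x) - Fr x"
      by (simp add: Fr_def sum_subtractf sum_distrib_left)
    thus "ereal (\<rho> * (\<Sum>i<m. sub_pnorm p (J i) x)) - (\<Sum>i<m. psi_conj \<phi> (\<rho> * sub_pnorm p (J i) x)) = ereal (Fr x)"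
      unfolding e by (simp add: g_def)
  qed
  define N where "N = (\<lambda>x. {i. i < m \<and> g i x \<noteq> 0})"
  define A where "A = (\<lambda>x. {i. i < m \<and> \<alpha> \<le> \<bar>g i x\<bar>})"
  have l0N: "l0 m (G_map m J p x) = card (N x)" for x by (simp add: l0_def G_map_def N_def g_def)
  have finN: "finite (N x)" "N x \<subseteq> {..<m}" for x by (auto simp: N_def)
  have finA: "finite (A x)" "A x \<subseteq> N x" for x using alpha by (auto simp: A_def N_def)
  obtain x0 where x0: "x0 \<in> Feas" "\<forall>y\<in>Feas. l0 m (G_map m J p x0) \<le> l0 m (G_map m J p y)"
      "l0 m (G_map m J p x0) = s"
    using opt unfolding Feas_def gmin_set_def by blast
  have sm: "s \<le> m" using x0(3) l0N[of x0] card_mono[OF _ finN(2)[of x0]] by simp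
  have smin: "\<forall>y\<in>Feas. s \<le> card (N y)" using x0 l0N by metis
  have F1: "Fr x \<le> card (N x)" for x
  proof -
    have "Fr x = (\<Sum>i\<in>N x. H (g i x))"
      unfolding Fr_def using finN Hp gnn by (intro sum.mono_neutral_right) (auto simp: N_def)
    also have "\<dots> \<le> (\<Sum>i\<in>N x. 1)" using Hp gnn finN by (intro sum_mono) blast
    finally show ?thesis by simp
  qed
  have HA: "H (g i x) = 1" if "i \<in> A x" for i x
  proof -
    have i: "i < m" "\<alpha> \<le> g i x" using that gnn by (auto simp: A_def)
    have "\<rho> * \<alpha> \<le> \<rho> * g i x" using i rho by simp
    hence "d \<le> \<rho> * g i x" using drho by linarith
    thus ?thesis using Hp gnn[OF i(1)] by force
  qed
  have F3: "card (A x) \<le> Fr x" for x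
  proof -
    have "(\<Sum>i\<in>A x. H (g i x)) \<le> Fr x"
      unfolding Fr_def using finA finN Hp gnn by (intro sum_mono2) force+
    moreover have "(\<Sum>i\<in>A x. H (g i x)) = card (A x)" using HA by simp
    ultimately show ?thesis by simp
  qed
  have F2: "s \<le> card (A x)" if "x \<in> Feas" for x
  proof -
    have "pi_k m s (G_map m J p x) \<ge> \<alpha>" using alpha_bd that by (simp add: Feas_def)
    hence "s \<le> card {i. i<m \<and> \<alpha> \<le> \<bar>G_map m J p x i\<bar>}" using s_nz sm by (intro pi_count) auto
    thus ?thesis by (simp add: A_def G_map_def g_def)
  qed
  have F4: "real s < Fr x" if "x \<in> Feas" "s < card (N x)" for x
  proof (cases "s < card (A x)")
    case True thus ?thesis using F3[of x] by linarith
  next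
    case False
    hence cA: "card (A x) = s" using F2[OF that(1)] by simp
    have "A x \<noteq> N x" using cA that(2) by auto
    then obtain j where j: "j \<in> N x" "j \<notin> A x" using finA by blast
    have jm: "j < m" "g j x \<noteq> 0" using j by (auto simp: N_def)
    have Hj: "H (g j x) > 0" using Hp gnn[OF jm(1)] jm by force
    have "(\<Sum>i\<in>insert j (A x). H (g i x)) \<le> Fr x"
      unfolding Fr_def using finA finN Hp gnn j by (intro sum_mono2) force+
    moreover have "(\<Sum>i\<in>insert j (A x). H (g i x)) = H (g j x) + card (A x)"
      using j finA HA by simp
    ultimately show ?thesis using Hj cA by linarith
  qed
  have Fx0: "Fr x0 \<le> s" using F1[of x0] x0(3) l0N[of x0] by simp
  show "gmin_set {x. f x \<le> ereal \<delta> \<and> x \<in> \<Omega>} (\<lambda>x. l0 m (G_map m J p x)) =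
           gmin_set {x. f x \<le> ereal \<delta> \<and> x \<in> \<Omega>}
             (\<lambda>x. ereal (\<rho> * (\<Sum>i<m. sub_pnorm p (J i) x))
                   - (\<Sum>i<m. psi_conj \<phi> (\<rho> * sub_pnorm p (J i) x)))"
    unfolding obj Feas_def[symmetric]
  proof (intro set_eqI iffI)
    fix x assume xg: "x \<in> gmin_set Feas (\<lambda>x. l0 m (G_map m J p x))"
    have x1: "x \<in> Feas" using xg unfolding gmin_set_def by blast
    have "l0 m (G_map m J p x) \<le> l0 m (G_map m J p x0)" using xg x0(1) unfolding gmin_set_def by blast
    hence x2: "card (N x) \<le> s" using x0(3) unfolding l0N by simp
    have "Fr x \<le> Fr y" if "y \<in> Feas" for y
      using F1[of x] x2 F2[OF that] F3[of y] by linarith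
    thus "x \<in> gmin_set Feas (\<lambda>x. ereal (Fr x))" using x1 unfolding gmin_set_def by simp
  next
    fix x assume xg: "x \<in> gmin_set Feas (\<lambda>x. ereal (Fr x))"
    have x1: "x \<in> Feas" using xg unfolding gmin_set_def by blast
    have "ereal (Fr x) \<le> ereal (Fr x0)" using xg x0(1) unfolding gmin_set_def by blast
    hence x2: "Fr x \<le> Fr x0" by simp
    have "\<not> s < card (N x)" using F4[OF x1] x2 Fx0 by linarith
    hence x3: "card (N x) \<le> s" by simp
    have "l0 m (G_map m J p x) \<le> l0 m (G_map m J p y)" if "y \<in> Feas" for y
      using smin that x3 unfolding l0N by (meson order_trans)
    thus "x \<in> gmin_set Feas (\<lambda>x. l0 m (G_map m J p x))" using x1 unfolding gmin_set_def by simp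
  qed
qed

end
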